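(* Let $s,t\ge 1$, let $k=s+t+4\le n$, and let $Q(s,t)$ be the unicyclic graph on $k$ vertices consisting of a $4$-cycle $v_1v_2v_3v_4v_1$, $s$ further vertices each adjacent only to $v_1$, and $t$ further vertices each adjacent only to $v_2$. Regard $Q(s,t)$ as a subgraph of $K_n$ and let $\Gamma=(K_n,Q(s,t)^-)$. Then, with $u=n-k$, $$\varphi(\Gamma,\lambda)=(\lambda+1)^{n-7}\Big(\lambda^7+(7-n)\lambda^6+(21-6n)\lambda^5+(12k-15n+4ku+8st-13)\lambda^4+(48k-20n+16ku+32st-157)\lambda^3+(113n-56k-8ku-16st(u-1)-267)\lambda^2+(250n-208k-48ku-32st(u+1)-185)\lambda+127n-116k-28ku+24st(2u-1)-47\Big).$$
   Context: A signed graph is a pair $(G,\sigma)$ with $\sigma:E(G)\to\{+,-\}$; its adjacency matrix has $(i,j)$-entry $\sigma(v_iv_j)$ if $v_iv_j\in E(G)$ and $0$ otherwise. For a subgraph $H$ of $K_n$, $(K_n,H^-)$ denotes the signed complete graph on $n$ vertices whose negative edges are exactly the edges of $H$ and all other edges are positive. $\varphi(\Gamma,\lambda)=\det(\lambda I-A(\Gamma))$. *)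

theory Defs
  imports "Jordan_Normal_Form.Char_Poly"
begin

text \<open>Vertices of K_n are 0,...,n-1.  The unicyclic graph Q(s,t) is placed on the
  vertices 0,...,s+t+3: the 4-cycle v1 v2 v3 v4 v1 is 0-1-2-3-0, the s pendant
  vertices attached to v1 = 0 are 4,...,s+3, and the t pendant vertices attached
  to v2 = 1 are s+4,...,s+t+3.\<close>

definition Q_edge :: "nat \<Rightarrow> nat \<Rightarrow> nat \<Rightarrow> nat \<Rightarrow> bool" where
  "Q_edge s t i j \<longleftrightarrow>
     {i, j} \<in> {{0, 1}, {1, 2}, {2, 3}, {3, 0}}
     \<or> (\<exists>a. 4 \<le> a \<and> a < s + 4 \<and> {i, j} = {0, a})
     \<or> (\<exists>b. s + 4 \<le> b \<and> b < s + t + 4 \<and> {i, j} = {1, b})"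

definition signed_complete_adj :: "nat \<Rightarrow> (nat \<Rightarrow> nat \<Rightarrow> bool) \<Rightarrow> int mat" where
  "signed_complete_adj n E =
     mat n n (\<lambda>(i, j). if i = j then 0 else if E i j then -1 else 1)"

end

theory Submission
  imports Defs
begin

lemma block_det:
  fixes P G :: "'a::idom mat" and c :: 'a
  assumes P: "P \<in> carrier_mat n p" and G: "G \<in> carrier_mat p p"
  shows "det (c \<cdot>\<^sub>m 1\<^sub>m n + P * G * P\<^sup>T) * c ^ p = c ^ n * det (c \<cdot>\<^sub>m 1\<^sub>m p + G * (P\<^sup>T * P))"
proof -
  have PT: "P\<^sup>T \<in> carrier_mat p n" using P by auto
  have GPT: "G * P\<^sup>T \<in> carrier_mat p n" using G PT by auto
  have dims[simp]: "dim_row P = n" "dim_col P = p" "dim_row G = p" "dim_col G = p" using P G by auto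
  define L1 where "L1 = four_block_mat (c \<cdot>\<^sub>m 1\<^sub>m n) P (0\<^sub>m p n) (1\<^sub>m p)"
  define L2 where "L2 = four_block_mat (1\<^sub>m n) (0\<^sub>m n p) (- (G * P\<^sup>T)) (1\<^sub>m p)"
  define W where "W = four_block_mat (1\<^sub>m n) (- P) (G * P\<^sup>T) (c \<cdot>\<^sub>m 1\<^sub>m p)"
  have dL1: "det L1 = c ^ n" unfolding L1_def
    by (subst det_four_block_mat_lower_left_zero[of _ n _ p], insert P, auto)
  have dL2: "det L2 = 1" unfolding L2_def
    by (subst det_four_block_mat_upper_right_zero[of _ n _ p], insert GPT, auto)
  have L1W: "L1 * W = four_block_mat (c \<cdot>\<^sub>m 1\<^sub>m n + P * G * P\<^sup>T) (0\<^sub>m n p) (G * P\<^sup>T) (c \<cdot>\<^sub>m 1\<^sub>m p)"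
  proof -
    have "L1 * W = four_block_mat (c \<cdot>\<^sub>m 1\<^sub>m n * 1\<^sub>m n + P * (G * P\<^sup>T)) (c \<cdot>\<^sub>m 1\<^sub>m n * - P + P * (c \<cdot>\<^sub>m 1\<^sub>m p))
      (0\<^sub>m p n * 1\<^sub>m n + 1\<^sub>m p * (G * P\<^sup>T)) (0\<^sub>m p n * - P + 1\<^sub>m p * (c \<cdot>\<^sub>m 1\<^sub>m p))"
      unfolding L1_def W_def
    proof (rule mult_four_block_mat)
      show "c \<cdot>\<^sub>m 1\<^sub>m n \<in> carrier_mat n n" "0\<^sub>m p n \<in> carrier_mat p n" "1\<^sub>m p \<in> carrier_mat p p"
        "1\<^sub>m n \<in> carrier_mat n n" "- P \<in> carrier_mat n p" "c \<cdot>\<^sub>m 1\<^sub>m p \<in> carrier_mat p p" using P by auto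
    qed (fact P GPT)+
    also have "c \<cdot>\<^sub>m 1\<^sub>m n * 1\<^sub>m n + P * (G * P\<^sup>T) = c \<cdot>\<^sub>m 1\<^sub>m n + P * G * P\<^sup>T"
      using P G PT by (simp del: assoc_mult_mat add: assoc_mult_mat[symmetric, of P n p G p])
    also have "c \<cdot>\<^sub>m 1\<^sub>m n * - P + P * (c \<cdot>\<^sub>m 1\<^sub>m p) = 0\<^sub>m n p"
    proof -
      have "c \<cdot>\<^sub>m 1\<^sub>m n * - P = c \<cdot>\<^sub>m (- P)"
        using mult_smult_assoc_mat[of "1\<^sub>m n" n n "- P" p c] P by simp
      moreover have "P * (c \<cdot>\<^sub>m 1\<^sub>m p) = c \<cdot>\<^sub>m P"
        using mult_smult_distrib[of P n p "1\<^sub>m p" p c] P by simp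
      ultimately show ?thesis using P by (intro eq_matI, auto)
    qed
    also have "0\<^sub>m p n * 1\<^sub>m n + 1\<^sub>m p * (G * P\<^sup>T) = G * P\<^sup>T" using GPT by simp
    also have "0\<^sub>m p n * - P + 1\<^sub>m p * (c \<cdot>\<^sub>m 1\<^sub>m p) = c \<cdot>\<^sub>m 1\<^sub>m p" using P by (simp; intro eq_matI; auto)
    finally show ?thesis .
  qed
  have L2W: "L2 * W = four_block_mat (1\<^sub>m n) (- P) (0\<^sub>m p n) (c \<cdot>\<^sub>m 1\<^sub>m p + G * (P\<^sup>T * P))"
  proof -
    have "L2 * W = four_block_mat (1\<^sub>m n * 1\<^sub>m n + 0\<^sub>m n p * (G * P\<^sup>T)) (1\<^sub>m n * - P + 0\<^sub>m n p * (c \<cdot>\<^sub>m 1\<^sub>m p))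
      (- (G * P\<^sup>T) * 1\<^sub>m n + 1\<^sub>m p * (G * P\<^sup>T)) (- (G * P\<^sup>T) * - P + 1\<^sub>m p * (c \<cdot>\<^sub>m 1\<^sub>m p))"
      unfolding L2_def W_def
    proof (rule mult_four_block_mat)
      show "1\<^sub>m n \<in> carrier_mat n n" "0\<^sub>m n p \<in> carrier_mat n p" "1\<^sub>m p \<in> carrier_mat p p"
        "- (G * P\<^sup>T) \<in> carrier_mat p n" "- P \<in> carrier_mat n p" "c \<cdot>\<^sub>m 1\<^sub>m p \<in> carrier_mat p p" using P GPT by auto
    qed (rule one_carrier_mat, fact GPT)
    also have "1\<^sub>m n * 1\<^sub>m n + 0\<^sub>m n p * (G * P\<^sup>T) = (1\<^sub>m n :: 'a mat)" using GPT by simp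
    also have "1\<^sub>m n * - P + 0\<^sub>m n p * (c \<cdot>\<^sub>m 1\<^sub>m p) = - P" using P by (simp; intro eq_matI; auto)
    also have "- (G * P\<^sup>T) * 1\<^sub>m n + 1\<^sub>m p * (G * P\<^sup>T) = 0\<^sub>m p n" using GPT by (simp; intro eq_matI; auto)
    also have "- (G * P\<^sup>T) * - P + 1\<^sub>m p * (c \<cdot>\<^sub>m 1\<^sub>m p) = c \<cdot>\<^sub>m 1\<^sub>m p + G * (P\<^sup>T * P)"
    proof -
      have "- (G * P\<^sup>T) * - P = G * (P\<^sup>T * P)" using G PT P by simp
      thus ?thesis using G P by (simp; intro eq_matI; auto)
    qed
    finally show ?thesis .
  qed
  have W: "W \<in> carrier_mat (n + p) (n + p)" unfolding W_def using P GPT by auto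
  have L1c: "L1 \<in> carrier_mat (n + p) (n + p)" unfolding L1_def using P by auto
  have L2c: "L2 \<in> carrier_mat (n + p) (n + p)" unfolding L2_def using GPT by auto
  have "det (L1 * W) = c ^ n * det W" using det_mult[OF L1c W] dL1 by simp
  moreover have "det (L2 * W) = det W" using det_mult[OF L2c W] dL2 by simp
  moreover have "det (L1 * W) = det (c \<cdot>\<^sub>m 1\<^sub>m n + P * G * P\<^sup>T) * c ^ p" unfolding L1W
    by (subst det_four_block_mat_upper_right_zero[of _ n _ p], insert P G GPT, auto)
  moreover have "det (L2 * W) = det (c \<cdot>\<^sub>m 1\<^sub>m p + G * (P\<^sup>T * P))" unfolding L2W
    by (subst det_four_block_mat_lower_left_zero[of _ n _ p], insert P G GPT, auto)
  ultimately show ?thesis by simp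
qed

definition lapt :: "'a::comm_ring_1 \<Rightarrow> nat \<Rightarrow> 'a \<Rightarrow> 'a" where
  "lapt x j D = x * ((-1)^j * D)"

lemma lapt_cong: "x = y \<Longrightarrow> lapt x j D = lapt y j D" by simp
lemma lapt_0: "lapt 0 j D = 0" by (simp add: lapt_def)

lemma det_exp:
  "det (mat (Suc m) (Suc m) f) = (\<Sum>j<Suc m. lapt (f (0,j)) j
      (det (mat m m (\<lambda>(i,k). f (Suc i, if k < j then k else Suc k)))))"
proof -
  have "det (mat (Suc m) (Suc m) f) = (\<Sum>j<Suc m. mat (Suc m) (Suc m) f $$ (0,j) * cofactor (mat (Suc m) (Suc m) f) 0 j)"
    by (rule laplace_expansion_row, auto)
  also have "\<dots> = (\<Sum>j<Suc m. lapt (f (0,j)) j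
      (det (mat m m (\<lambda>(i,k). f (Suc i, if k < j then k else Suc k)))))"
  proof (rule sum.cong[OF refl])
    fix j assume j: "j \<in> {..<Suc m}"
    have "mat_delete (mat (Suc m) (Suc m) f) 0 j = mat m m (\<lambda>(i,k). f (Suc i, if k < j then k else Suc k))"
      unfolding mat_delete_def using j by (intro eq_matI, auto)
    thus "mat (Suc m) (Suc m) f $$ (0,j) * cofactor (mat (Suc m) (Suc m) f) 0 j = lapt (f (0,j)) j
      (det (mat m m (\<lambda>(i,k). f (Suc i, if k < j then k else Suc k))))"
      unfolding cofactor_def lapt_def using j by simp
  qed
  finally show ?thesis .
qed

definition delcol :: "nat \<Rightarrow> 'a list \<Rightarrow> 'a list" where
  "delcol j r = take j r @ drop (Suc j) r"

fun ldet :: "'a::comm_ring_1 list list \<Rightarrow> 'a" where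
  "ldet [] = 1"
| "ldet (r # rs) = sum_list (map (\<lambda>j. lapt (r ! j) j (ldet (map (delcol j) rs))) [0..<length r])"

lemma delcol_nth: "j < length r \<Longrightarrow> k < length r - 1 \<Longrightarrow> delcol j r ! k = r ! (if k < j then k else Suc k)"
  unfolding delcol_def by (auto simp: nth_append min_def)

lemma delcol_length: "j < length r \<Longrightarrow> length (delcol j r) = length r - 1"
  unfolding delcol_def by auto

lemma det_ldet:
  "length xss = n \<Longrightarrow> (\<forall>r \<in> set xss. length r = n) \<Longrightarrow>
   det (mat n n (\<lambda>(i,j). xss ! i ! j)) = ldet xss"
proof (induction n arbitrary: xss)
  case 0
  then have "xss = []" by simp
  moreover have "det (mat 0 0 (\<lambda>(i,j). xss ! i ! j)) = (1::'a)" by (rule det_dim_zero, auto)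
  ultimately show ?case by simp
next
  case (Suc m)
  then obtain r rs where xss: "xss = r # rs" by (cases xss, auto)
  have lrs: "length rs = m" and lr: "length r = Suc m" using Suc.prems xss by auto
  have "det (mat (Suc m) (Suc m) (\<lambda>(i,j). xss ! i ! j)) = (\<Sum>j<Suc m. lapt (r ! j) j
      (det (mat m m (\<lambda>(i,k). rs ! i ! (if k < j then k else Suc k)))))"
    unfolding xss det_exp by simp
  also have "\<dots> = (\<Sum>j<Suc m. lapt (r ! j) j (ldet (map (delcol j) rs)))"
  proof (rule sum.cong[OF refl])
    fix j assume j: "j \<in> {..<Suc m}"
    have "mat m m (\<lambda>(i,k). rs ! i ! (if k < j then k else Suc k)) = mat m m (\<lambda>(i,k). map (delcol j) rs ! i ! k)"
    proof (intro eq_matI)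
      fix i k assume "i < dim_row (mat m m (\<lambda>(i,k). map (delcol j) rs ! i ! k))" "k < dim_col (mat m m (\<lambda>(i,k). map (delcol j) rs ! i ! k))"
      hence i: "i < m" and k: "k < m" by auto
      have "rs ! i \<in> set rs" using i lrs by auto
      hence "length (rs ! i) = Suc m" using Suc.prems xss by auto
      thus "mat m m (\<lambda>(i,k). rs ! i ! (if k < j then k else Suc k)) $$ (i, k) = mat m m (\<lambda>(i,k). map (delcol j) rs ! i ! k) $$ (i, k)"
        using i k j lrs by (simp add: delcol_nth)
    qed auto
    moreover have "det (mat m m (\<lambda>(i,k). map (delcol j) rs ! i ! k)) = ldet (map (delcol j) rs)"
    proof (rule Suc.IH)
      show "length (map (delcol j) rs) = m" using lrs by simp
      show "\<forall>r\<in>set (map (delcol j) rs). length r = m"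
        using Suc.prems xss j by (auto simp: delcol_length)
    qed
    ultimately show "lapt (r ! j) j (det (mat m m (\<lambda>(i,k). rs ! i ! (if k < j then k else Suc k)))) =
       lapt (r ! j) j (ldet (map (delcol j) rs))" by simp
  qed
  also have "\<dots> = ldet xss"
    using lr unfolding xss by (simp add: sum_list_distinct_conv_sum_set atLeast0LessThan del: upt_Suc)
  finally show ?case .
qed

definition Mrows :: "'a::comm_ring_1 \<Rightarrow> 'a \<Rightarrow> 'a \<Rightarrow> 'a \<Rightarrow> 'a list list" where
  "Mrows c S T U = [[c, 2, 0, 2, 2*S, 0, -c],[2, c, 2, 0, 0, 2*T, -c],[0, 2, c, 2, 0, 0, -c],
    [2, 0, 2, c, 0, 0, -c],[2, 0, 0, 0, c, 0, -c],[0, 2, 0, 0, 0, c, -c],[-1, -1, -1, -1, -S, -T, c - U]]"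

lemma ldet7:
  fixes x S T U :: "'a::comm_ring_1"
  shows "ldet (Mrows (x+1) S T U) =
    (let k = S + T + 4; u = U; N = S + T + U + 4 in
     x^7 + (7 - N) * x^6 + (21 - 6*N) * x^5 + (12*k - 15*N + 4*k*u + 8*S*T - 13) * x^4
     + (48*k - 20*N + 16*k*u + 32*S*T - 157) * x^3
     + (113*N - 56*k - 8*k*u - 16*S*T*(u - 1) - 267) * x^2
     + (250*N - 208*k - 48*k*u - 32*S*T*(u + 1) - 185) * x
     + (127*N - 116*k - 28*k*u + 24*S*T*(2*u - 1) - 47))"
  unfolding Mrows_def
  apply (simp add: upt_rec lapt_0 delcol_def cong: lapt_cong)
  apply (simp only: lapt_def)
  apply (simp add: upt_rec lapt_0 delcol_def cong: lapt_cong)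
  apply (simp only: lapt_def)
  apply (simp add: upt_rec lapt_0 delcol_def cong: lapt_cong)
  apply (simp only: lapt_def)
  apply (simp add: upt_rec lapt_0 delcol_def cong: lapt_cong)
  apply (simp only: lapt_def)
  apply (simp add: upt_rec lapt_0 delcol_def cong: lapt_cong)
  apply (simp only: lapt_def)
  apply (simp add: upt_rec lapt_0 delcol_def cong: lapt_cong)
  apply (simp only: lapt_def)
  apply (simp add: upt_rec lapt_0 delcol_def cong: lapt_cong)
  apply (simp only: lapt_def)
  apply (simp add: Let_def)
  by (simp add: algebra_simps eval_nat_numeral)


declare ldet.simps[simp del]

definition cls :: "nat \<Rightarrow> nat \<Rightarrow> nat \<Rightarrow> nat" where
  "cls s t i = (if i < 4 then i else if i < s + 4 then 4 else if i < s + t + 4 then 5 else 6)"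

definition Fq :: "nat \<Rightarrow> nat \<Rightarrow> bool" where
  "Fq a b = ((a = 0 \<and> b = 1) \<or> (a = 1 \<and> b = 0) \<or> (a = 1 \<and> b = 2) \<or> (a = 2 \<and> b = 1) \<or>
    (a = 2 \<and> b = 3) \<or> (a = 3 \<and> b = 2) \<or> (a = 3 \<and> b = 0) \<or> (a = 0 \<and> b = 3) \<or>
    (a = 0 \<and> b = 4) \<or> (a = 4 \<and> b = 0) \<or> (a = 1 \<and> b = 5) \<or> (a = 5 \<and> b = 1))"

definition Pm :: "nat \<Rightarrow> nat \<Rightarrow> nat \<Rightarrow> int poly mat" where
  "Pm n s t = mat n 7 (\<lambda>(i,a). if cls s t i = a then 1 else 0)"

definition Gm :: "int poly mat" where
  "Gm = mat 7 7 (\<lambda>(a,b). if Fq a b then 1 else -1)"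

definition cnt :: "nat \<Rightarrow> nat \<Rightarrow> nat \<Rightarrow> nat list" where
  "cnt n s t = [1, 1, 1, 1, s, t, n - (s + t + 4)]"

definition Dm :: "nat \<Rightarrow> nat \<Rightarrow> nat \<Rightarrow> int poly mat" where
  "Dm n s t = mat 7 7 (\<lambda>(a,b). if a = b then of_nat (cnt n s t ! a) else 0)"

definition Lm :: "int poly mat" where
  "Lm = mat 7 7 (\<lambda>(a,b). if a = b then 1 else if b = 6 then -1 else 0)"

lemma cls_lt: "cls s t i < 7" unfolding cls_def by auto

lemma Q_edge_alt: "Q_edge s t i j \<longleftrightarrow>
   ((i = 0 \<and> j = 1) \<or> (i = 1 \<and> j = 0) \<or> (i = 1 \<and> j = 2) \<or> (i = 2 \<and> j = 1) \<or>
    (i = 2 \<and> j = 3) \<or> (i = 3 \<and> j = 2) \<or> (i = 3 \<and> j = 0) \<or> (i = 0 \<and> j = 3)) \<or>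
   (i = 0 \<and> 4 \<le> j \<and> j < s + 4) \<or> (j = 0 \<and> 4 \<le> i \<and> i < s + 4) \<or>
   (i = 1 \<and> s + 4 \<le> j \<and> j < s + t + 4) \<or> (j = 1 \<and> s + 4 \<le> i \<and> i < s + t + 4)"
proof -
  have h1: "{i, j} \<in> {{0, 1}, {1, 2}, {2, 3}, {3, 0}} \<longleftrightarrow>
   ((i = 0 \<and> j = 1) \<or> (i = 1 \<and> j = 0) \<or> (i = 1 \<and> j = 2) \<or> (i = 2 \<and> j = 1) \<or>
    (i = 2 \<and> j = 3) \<or> (i = 3 \<and> j = 2) \<or> (i = 3 \<and> j = 0) \<or> (i = 0 \<and> j = 3))"
    by (auto simp: doubleton_eq_iff)
  have h2: "(\<exists>a. 4 \<le> a \<and> a < s + 4 \<and> {i, j} = {0, a}) \<longleftrightarrow>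
     (i = 0 \<and> 4 \<le> j \<and> j < s + 4) \<or> (j = 0 \<and> 4 \<le> i \<and> i < s + 4)"
    by (auto simp: doubleton_eq_iff)
  have h3: "(\<exists>b. s + 4 \<le> b \<and> b < s + t + 4 \<and> {i, j} = {1, b}) \<longleftrightarrow>
     (i = 1 \<and> s + 4 \<le> j \<and> j < s + t + 4) \<or> (j = 1 \<and> s + 4 \<le> i \<and> i < s + t + 4)"
    by (auto simp: doubleton_eq_iff)
  show ?thesis unfolding Q_edge_def h1 h2 h3 by (simp only: disj_assoc)
qed

lemma Q_cls: "Q_edge s t i j = Fq (cls s t i) (cls s t j)"
  unfolding Q_edge_alt Fq_def cls_def
  by (cases "i < 4"; cases "i < s + 4"; cases "i < s + t + 4"; cases "j < 4"; cases "j < s + 4"; cases "j < s + t + 4"; auto)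

lemma lt7_cases: "(a::nat) < 7 \<Longrightarrow> a = 0 \<or> a = 1 \<or> a = 2 \<or> a = 3 \<or> a = 4 \<or> a = 5 \<or> a = 6"
  by auto

lemma sum7: "(\<Sum>i\<in>{0..<7::nat}. f i) = f 0 + f 1 + f 2 + f 3 + f 4 + f 5 + (f 6 :: 'a :: comm_monoid_add)"
  by (simp add: eval_nat_numeral atLeast0_lessThan_Suc add_ac)

lemma PGP_entry:
  assumes i: "i < n" and j: "j < n"
  shows "(Pm n s t * Gm * (Pm n s t)\<^sup>T) $$ (i,j) = (if Fq (cls s t i) (cls s t j) then 1 else -1)"
proof -
  have "(Pm n s t * Gm * (Pm n s t)\<^sup>T) $$ (i,j) =
    (\<Sum>b\<in>{0..<7}. (\<Sum>a\<in>{0..<7}. (if cls s t i = a then 1 else 0) * (if Fq a b then 1 else -1)) * (if cls s t j = b then 1 else 0))"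
    using i j by (simp add: Pm_def Gm_def scalar_prod_def)
  also have "\<dots> = (if Fq (cls s t i) (cls s t j) then 1 else -1)"
    using lt7_cases[OF cls_lt[of s t i]] lt7_cases[OF cls_lt[of s t j]]
    unfolding sum7 Fq_def
    by (elim disjE; simp)
  finally show ?thesis .
qed

lemma Gm_dims[simp]: "dim_row Gm = 7" "dim_col Gm = 7"
  by (simp_all add: Gm_def)

lemma Dm_dims[simp]: "dim_row (Dm n s t) = 7" "dim_col (Dm n s t) = 7"
  by (simp_all add: Dm_def)

lemma Lm_dims[simp]: "dim_row Lm = 7" "dim_col Lm = 7"
  by (simp_all add: Lm_def)

lemma Pm_dims[simp]: "dim_row (Pm n s t) = n" "dim_col (Pm n s t) = 7"
  by (simp_all add: Pm_def)

lemma a2: "[:1,1:] + - 1 = ([:0,1:] :: int poly)" by (simp add: poly_eq_iff coeff_pCons split: nat.split)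
lemma a3: "[:1,1:] - 1 = ([:0,1:] :: int poly)" by (simp add: poly_eq_iff coeff_pCons split: nat.split)

lemma CPM:
  "char_poly_matrix (signed_complete_adj n (Q_edge s t)) = [:1,1:] \<cdot>\<^sub>m 1\<^sub>m n + Pm n s t * Gm * (Pm n s t)\<^sup>T"
proof (rule eq_matI)
  fix i j assume "i < dim_row ([:1,1:] \<cdot>\<^sub>m 1\<^sub>m n + Pm n s t * Gm * (Pm n s t)\<^sup>T)"
    "j < dim_col ([:1,1:] \<cdot>\<^sub>m 1\<^sub>m n + Pm n s t * Gm * (Pm n s t)\<^sup>T)"
  hence i: "i < n" and j: "j < n" by (auto simp: Pm_def)
  have Fd: "\<not> Fq a a" for a unfolding Fq_def by auto
  show "char_poly_matrix (signed_complete_adj n (Q_edge s t)) $$ (i, j) =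
     ([:1,1:] \<cdot>\<^sub>m 1\<^sub>m n + Pm n s t * Gm * (Pm n s t)\<^sup>T) $$ (i, j)"
  proof -
    have R: "([:1,1:] \<cdot>\<^sub>m 1\<^sub>m n + Pm n s t * Gm * (Pm n s t)\<^sup>T) $$ (i, j) =
      (if i = j then [:1,1:] else 0) + (if Fq (cls s t i) (cls s t j) then 1 else -1)"
    proof -
      have R1: "([:1,1:] \<cdot>\<^sub>m 1\<^sub>m n + Pm n s t * Gm * (Pm n s t)\<^sup>T) $$ (i, j) =
        ([:1,1:] \<cdot>\<^sub>m 1\<^sub>m n) $$ (i, j) + (Pm n s t * Gm * (Pm n s t)\<^sup>T) $$ (i, j)"
        using i j by (intro index_add_mat(1)) simp_all
      have S: "([:1,1:] \<cdot>\<^sub>m 1\<^sub>m n) $$ (i, j) = (if i = j then [:1,1:] else (0 :: int poly))"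
      proof -
        have S0: "([:1,1:] \<cdot>\<^sub>m 1\<^sub>m n) $$ (i, j) = [:1,1:] * (1\<^sub>m n $$ (i, j))"
          using i j by (intro index_smult_mat(1)) auto
        have S1: "(1\<^sub>m n :: int poly mat) $$ (i, j) = (if i = j then 1 else 0)" using i j by (rule index_one_mat)
        show ?thesis unfolding S0 S1
          by (cases "i = j") (simp_all only: simp_thms if_True if_False mult_1_right mult_zero_right)
      qed
      show ?thesis unfolding R1 PGP_entry[OF i j] S ..
    qed
    show ?thesis
    proof (cases "i = j")
      case True
      then show ?thesis unfolding R using i Fd[of "cls s t i"]
        by (simp add: char_poly_matrix_def signed_complete_adj_def a2 a3)
    next
      case False
      then show ?thesis unfolding R using i j
        by (simp add: char_poly_matrix_def signed_complete_adj_def Q_cls one_pCons)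
    qed
  qed
qed (auto simp: char_poly_matrix_def signed_complete_adj_def Pm_def)

lemma card_cls:
  assumes n: "s + t + 4 \<le> n" and a: "a < 7"
  shows "card {i. i < n \<and> cls s t i = a} = cnt n s t ! a"
proof -
  have e0: "{i. i < n \<and> cls s t i = 0} = {0}" using n by (auto simp: cls_def split: if_splits)
  have e1: "{i. i < n \<and> cls s t i = 1} = {1}" using n by (auto simp: cls_def split: if_splits)
  have e2: "{i. i < n \<and> cls s t i = 2} = {2}" using n by (auto simp: cls_def split: if_splits)
  have e3: "{i. i < n \<and> cls s t i = 3} = {3}" using n by (auto simp: cls_def split: if_splits)
  have e4: "{i. i < n \<and> cls s t i = 4} = {4..<s+4}" using n by (auto simp: cls_def split: if_splits)
  have e5: "{i. i < n \<and> cls s t i = 5} = {s+4..<s+t+4}" using n by (auto simp: cls_def split: if_splits)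
  have e6: "{i. i < n \<and> cls s t i = 6} = {s+t+4..<n}" using n by (auto simp: cls_def split: if_splits)
  show ?thesis using lt7_cases[OF a]
    by (elim disjE) (simp_all only: e0 e1 e2 e3 e4 e5 e6; simp add: cnt_def)+
qed

lemma PtP:
  assumes n: "s + t + 4 \<le> n"
  shows "(Pm n s t)\<^sup>T * Pm n s t = Dm n s t"
proof (rule eq_matI)
  fix a b assume "a < dim_row (Dm n s t)" "b < dim_col (Dm n s t)"
  hence a: "a < 7" and b: "b < 7" by (auto simp: Dm_def)
  have "((Pm n s t)\<^sup>T * Pm n s t) $$ (a,b) = (\<Sum>i\<in>{0..<n}. (if cls s t i = a then 1 else 0) * (if cls s t i = b then 1 else 0))"
    using a b by (simp add: Pm_def scalar_prod_def)
  also have "\<dots> = (\<Sum>i\<in>{0..<n}. if cls s t i = a \<and> a = b then 1 else 0)"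
    by (rule sum.cong, auto)
  also have "\<dots> = (if a = b then of_nat (card {i. i < n \<and> cls s t i = a}) else 0)"
  proof (cases "a = b")
    case True
    have "{0..<n} \<inter> {i. cls s t i = a} = {i. i < n \<and> cls s t i = a}" by auto
    with True show ?thesis by (simp add: sum.If_cases)
  qed simp
  also have "\<dots> = Dm n s t $$ (a,b)"
    using a b card_cls[OF n a] by (cases "a = b", simp_all add: Dm_def)
  finally show "((Pm n s t)\<^sup>T * Pm n s t) $$ (a,b) = Dm n s t $$ (a,b)" .
qed (auto simp: Pm_def Dm_def)

lemma M7a:
  "[:1,1:] \<cdot>\<^sub>m 1\<^sub>m 7 + Gm * Dm n s t = mat 7 7 (\<lambda>(a,b). (if a = b then [:1,1:] else 0) +
     (if Fq a b then 1 else -1) * of_nat (cnt n s t ! b))"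
proof (rule eq_matI)
  fix a b assume "a < dim_row (mat 7 7 (\<lambda>(a,b). (if a = b then [:1,1:] else 0) +
     (if Fq a b then 1 else -1) * (of_nat (cnt n s t ! b) :: int poly)))"
    "b < dim_col (mat 7 7 (\<lambda>(a,b). (if a = b then [:1,1:] else 0) +
     (if Fq a b then 1 else -1) * (of_nat (cnt n s t ! b) :: int poly)))"
  hence a: "a < 7" and b: "b < 7" by auto
  have "(Gm * Dm n s t) $$ (a,b) = (\<Sum>k\<in>{0..<7}. (if Fq a k then 1 else -1) * (if k = b then of_nat (cnt n s t ! k) else 0))"
    using a b by (simp add: Gm_def Dm_def scalar_prod_def)
  also have "\<dots> = (\<Sum>k\<in>{0..<7}. if k = b then (if Fq a b then 1 else -1) * of_nat (cnt n s t ! b) else 0)"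
    by (rule sum.cong, auto)
  also have "\<dots> = (if Fq a b then 1 else -1) * of_nat (cnt n s t ! b)"
    using b by simp
  finally show "([:1,1:] \<cdot>\<^sub>m 1\<^sub>m 7 + Gm * Dm n s t) $$ (a, b) = mat 7 7 (\<lambda>(a,b). (if a = b then [:1,1:] else 0) +
     (if Fq a b then 1 else -1) * of_nat (cnt n s t ! b)) $$ (a, b)"
    using a b by (simp add: Gm_def Dm_def one_pCons)
qed (auto simp: Gm_def Dm_def)

lemma c_eq: "[:1,1:] = [:0,1:] + (1 :: int poly)"
  by (simp add: one_pCons)

lemma LM7:
  "Lm * ([:1,1:] \<cdot>\<^sub>m 1\<^sub>m 7 + Gm * Dm n s t) =
   mat 7 7 (\<lambda>(i,j). Mrows [:1,1:] (of_nat s) (of_nat t) (of_nat (n - (s + t + 4))) ! i ! j)"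
proof (rule eq_matI)
  fix i j assume "i < dim_row (mat 7 7 (\<lambda>(i,j). Mrows [:1,1:] (of_nat s) (of_nat t) (of_nat (n - (s + t + 4))) ! i ! (j::nat) :: int poly))"
    "j < dim_col (mat 7 7 (\<lambda>(i,j). Mrows [:1,1:] (of_nat s) (of_nat t) (of_nat (n - (s + t + 4))) ! i ! (j::nat) :: int poly))"
  hence i: "i < 7" and j: "j < 7" by auto
  show "(Lm * ([:1,1:] \<cdot>\<^sub>m 1\<^sub>m 7 + Gm * Dm n s t)) $$ (i, j) =
    mat 7 7 (\<lambda>(i,j). Mrows [:1,1:] (of_nat s) (of_nat t) (of_nat (n - (s + t + 4))) ! i ! j) $$ (i, j)"
    unfolding M7a using lt7_cases[OF i] lt7_cases[OF j]
    by (elim disjE; simp add: Lm_def scalar_prod_def sum7 Mrows_def cnt_def Fq_def algebra_simps)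
qed (auto simp: Lm_def)

lemma det_Lm: "det Lm = 1"
proof -
  have "det Lm = prod_list (diag_mat Lm)"
    by (rule det_upper_triangular[of _ 7], auto simp: Lm_def upper_triangular_def)
  also have "\<dots> = 1" by (simp add: Lm_def diag_mat_def upt_rec)
  finally show ?thesis .
qed

definition Xp :: "int poly" where "Xp = [:0,1:]"

lemma pc1: "pCons (a::int) p = of_int a + Xp * p"
  by (simp add: of_int_poly Xp_def)

lemma E_gen:
  fixes x :: "'a::comm_ring_1" and s t u' :: nat
  shows "(let k = of_nat s + of_nat t + 4; u = of_nat u'; N = of_nat s + of_nat t + of_nat u' + 4 in
     x^7 + (7 - N) * x^6 + (21 - 6*N) * x^5 + (12*k - 15*N + 4*k*u + 8*of_nat s*of_nat t - 13) * x^4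
     + (48*k - 20*N + 16*k*u + 32*of_nat s*of_nat t - 157) * x^3
     + (113*N - 56*k - 8*k*u - 16*of_nat s*of_nat t*(u - 1) - 267) * x^2
     + (250*N - 208*k - 48*k*u - 32*of_nat s*of_nat t*(u + 1) - 185) * x
     + (127*N - 116*k - 28*k*u + 24*of_nat s*of_nat t*(2*u - 1) - 47)) =
   (let k = int (s + t + 4); u = int (s + t + 4 + u') - k; N = int (s + t + 4 + u'); S = int s; T = int t in
    of_int (127*N - 116*k - 28*k*u + 24*S*T*(2*u - 1) - 47) + x * (
    of_int (250*N - 208*k - 48*k*u - 32*S*T*(u + 1) - 185) + x * (
    of_int (113*N - 56*k - 8*k*u - 16*S*T*(u - 1) - 267) + x * (
    of_int (48*k - 20*N + 16*k*u + 32*S*T - 157) + x * (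
    of_int (12*k - 15*N + 4*k*u + 8*S*T - 13) + x * (
    of_int (21 - 6*N) + x * (
    of_int (7 - N) + x * (of_int 1 + x * 0))))))))"
  by (simp add: Let_def algebra_simps eval_nat_numeral)

theorem lemma3p3:
  fixes s t n :: nat
  assumes "s \<ge> 1" and "t \<ge> 1" and "s + t + 4 \<le> n"
  shows "let k = int (s + t + 4); u = int n - k; N = int n; S = int s; T = int t;
             P = [: 127*N - 116*k - 28*k*u + 24*S*T*(2*u - 1) - 47,
                    250*N - 208*k - 48*k*u - 32*S*T*(u + 1) - 185,
                    113*N - 56*k - 8*k*u - 16*S*T*(u - 1) - 267,
                    48*k - 20*N + 16*k*u + 32*S*T - 157,
                    12*k - 15*N + 4*k*u + 8*S*T - 13,
                    21 - 6*N,
                    7 - N,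
                    1 :]
         in char_poly (signed_complete_adj n (Q_edge s t)) * [:1, 1:] ^ 7
              = [:1, 1:] ^ n * P"
  proof -
  obtain u' where n: "n = s + t + 4 + u'" using assms(3) by (metis le_Suc_ex)
  define A where "A = signed_complete_adj n (Q_edge s t)"
  define S' where "S' = (of_nat s :: int poly)"
  define T' where "T' = (of_nat t :: int poly)"
  define U' where "U' = (of_nat u' :: int poly)"
  have Pc: "Pm n s t \<in> carrier_mat n 7" by (simp add: Pm_def)
  have Gc: "Gm \<in> carrier_mat 7 7" by (simp add: Gm_def)
  have Dc: "Dm n s t \<in> carrier_mat 7 7" by (simp add: Dm_def)
  have M7c: "[:1,1:] \<cdot>\<^sub>m 1\<^sub>m 7 + Gm * Dm n s t \<in> carrier_mat 7 7"
    by (rule add_carrier_mat[OF mult_carrier_mat[OF Gc Dc]])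
  have Lc: "Lm \<in> carrier_mat 7 7" by (simp add: Lm_def)
  have "char_poly A * [:1,1:] ^ 7 = det ([:1,1:] \<cdot>\<^sub>m 1\<^sub>m n + Pm n s t * Gm * (Pm n s t)\<^sup>T) * [:1,1:] ^ 7"
    by (simp only: char_poly_def A_def CPM)
  also have "\<dots> = [:1,1:] ^ n * det ([:1,1:] \<cdot>\<^sub>m 1\<^sub>m 7 + Gm * ((Pm n s t)\<^sup>T * Pm n s t))"
    by (rule block_det[OF Pc Gc])
  also have "det ([:1,1:] \<cdot>\<^sub>m 1\<^sub>m 7 + Gm * ((Pm n s t)\<^sup>T * Pm n s t)) = det ([:1,1:] \<cdot>\<^sub>m 1\<^sub>m 7 + Gm * Dm n s t)"
    using PtP[OF assms(3)] by simp
  also have "\<dots> = det (Lm * ([:1,1:] \<cdot>\<^sub>m 1\<^sub>m 7 + Gm * Dm n s t))"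
    using det_mult[OF Lc M7c] det_Lm by simp
  also have "\<dots> = ldet (Mrows [:1,1:] (of_nat s) (of_nat t) (of_nat (n - (s + t + 4))))"
    unfolding LM7 by (rule det_ldet, auto simp: Mrows_def)
  also have "\<dots> = ldet (Mrows (Xp + 1) S' T' U')"
    unfolding Xp_def S'_def T'_def U'_def n c_eq by simp
  finally have key: "char_poly A * [:1,1:] ^ 7 = [:1,1:] ^ n * ldet (Mrows (Xp + 1) S' T' U')" .
  have E1: "ldet (Mrows (Xp + 1) S' T' U') = (let k = int (s + t + 4); u = int n - k; N = int n; S = int s; T = int t in
    of_int (127*N - 116*k - 28*k*u + 24*S*T*(2*u - 1) - 47) + Xp * (
    of_int (250*N - 208*k - 48*k*u - 32*S*T*(u + 1) - 185) + Xp * (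
    of_int (113*N - 56*k - 8*k*u - 16*S*T*(u - 1) - 267) + Xp * (
    of_int (48*k - 20*N + 16*k*u + 32*S*T - 157) + Xp * (
    of_int (12*k - 15*N + 4*k*u + 8*S*T - 13) + Xp * (
    of_int (21 - 6*N) + Xp * (
    of_int (7 - N) + Xp * (of_int 1 + Xp * 0))))))))"
    unfolding ldet7 S'_def T'_def U'_def n by (rule E_gen)
  have E2: "(let k = int (s + t + 4); u = int n - k; N = int n; S = int s; T = int t;
             P = [: 127*N - 116*k - 28*k*u + 24*S*T*(2*u - 1) - 47,
                    250*N - 208*k - 48*k*u - 32*S*T*(u + 1) - 185,
                    113*N - 56*k - 8*k*u - 16*S*T*(u - 1) - 267,
                    48*k - 20*N + 16*k*u + 32*S*T - 157,
                    12*k - 15*N + 4*k*u + 8*S*T - 13,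
                    21 - 6*N,
                    7 - N,
                    1 :] in P) = (let k = int (s + t + 4); u = int n - k; N = int n; S = int s; T = int t in
    of_int (127*N - 116*k - 28*k*u + 24*S*T*(2*u - 1) - 47) + Xp * (
    of_int (250*N - 208*k - 48*k*u - 32*S*T*(u + 1) - 185) + Xp * (
    of_int (113*N - 56*k - 8*k*u - 16*S*T*(u - 1) - 267) + Xp * (
    of_int (48*k - 20*N + 16*k*u + 32*S*T - 157) + Xp * (
    of_int (12*k - 15*N + 4*k*u + 8*S*T - 13) + Xp * (
    of_int (21 - 6*N) + Xp * (
    of_int (7 - N) + Xp * (of_int 1 + Xp * 0))))))))"
    by (simp only: Let_def pc1)
  show ?thesis using key unfolding A_def E1 E2[symmetric] by (simp only: Let_def)
qed

end
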